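(* Let $A,B,C\in\mathbb{C}$ be the vertices of a nondegenerate counterclockwise triangle. Define $$P_1=A+\rho(C-A),\qquad P_2=A+\rho^{-1}(B-A),$$ $$X=P_2+\rho^{-1}(A-P_2),\qquad Y=P_2+\rho(P_1-P_2).$$ Let $M=(B+C)/2$. Let $\Gamma$ be the circumcircle of the equilateral triangle with side $BM$ whose third vertex lies on the same side of line $BC$ as $A$. Let $\sigma$ be the signed area of the ordered triangle $F_2=(P_2,Y,X)$, positive for counterclockwise. Then: - $\sigma>0$ if $A$ lies outside $\Gamma$; - $\sigma=0$ (the three vertices of $F_2$ are collinear) if $A$ lies on $\Gamma$; - $\sigma<0$ if $A$ lies inside $\Gamma$.
   Context: The plane is identified with $\mathbb{C}$, and $\rho=e^{2\pi i/3}$. Geometric meaning of the construction: - $H_1$ is the regular hexagon erected outwardly on $AC$, and $H_2$ the one erected outwardly on $AB$. - $P_1$ and $P_2$ are the vertices adjacent to $A$, other than $C$ resp. $B$, of $H_1$ resp. $H_2$. - $F_1=(A,P_1,P_2)$ is the flank triangle between $H_1$ and $H_2$. - $X$ is the vertex of $H_2$ adjacent to $P_2$ other than $A$. - $Y$ is the vertex adjacent to $P_2$, other than $P_1$, of the regular hexagon $H_3$ erected on the side $P_1P_2$ of $F_1$. - $F_2$ is the flank triangle between $H_2$ and $H_3$. *)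

theory Defs
  imports Complex_Main
begin

definition rho :: complex where
  "rho = cis (2 * pi / 3)"

definition signed_area :: "complex \<Rightarrow> complex \<Rightarrow> complex \<Rightarrow> real" where
  "signed_area p q r = Im (cnj (q - p) * (r - p)) / 2"

definition same_side :: "complex \<Rightarrow> complex \<Rightarrow> complex \<Rightarrow> complex \<Rightarrow> bool" where
  "same_side p q x y \<longleftrightarrow> signed_area p q x * signed_area p q y > 0"

end

theory Submission imports Defs begin

lemma solveTZ:
  fixes d1 d2 t1 t2 z1 z2 :: real
  assumes D: "D = d1^2+d2^2" and Dp: "D > 0"
    and h1: "t1^2+t2^2 = D" and h2: "(t1-d1)^2+(t2-d2)^2 = D" and h3: "d1*t2 - d2*t1 > 0"
    and h4: "z1^2+z2^2 = (z1-d1)^2+(z2-d2)^2" and h5: "z1^2+z2^2 = (z1-t1)^2+(z2-t2)^2"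
  shows "z1 = d1/2 - d2/(2*sqrt 3) \<and> z2 = d2/2 + d1/(2*sqrt 3)"
proof -
  have r3: "sqrt 3 ^ 2 = (3::real)" by simp
  have rp: "sqrt 3 > (0::real)" by simp
  have dot: "t1*d1 + t2*d2 = D/2" using D h1 h2 by (simp add: power2_eq_square algebra_simps)
  have lag: "(d1*t2 - d2*t1)^2 + (t1*d1 + t2*d2)^2 = D * (t1^2+t2^2)"
    unfolding D by (simp add: power2_eq_square algebra_simps)
  have csq: "(d1*t2 - d2*t1)^2 = (sqrt 3 * D / 2)^2"
  proof -
    have "(d1*t2 - d2*t1)^2 = D*D - (D/2)^2" using lag dot h1 by simp
    also have "\<dots> = (sqrt 3 * D / 2)^2" by (simp add: power_mult_distrib power_divide power2_eq_square)
    finally show ?thesis .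
  qed
  have crs: "d1*t2 - d2*t1 = sqrt 3 * D / 2"
    using csq h3 Dp by (smt (verit) power2_eq_imp_eq real_sqrt_gt_zero zero_le_divide_iff mult_nonneg_nonneg)
  have "D*t1 = (t1*d1 + t2*d2)*d1 - (d1*t2 - d2*t1)*d2" unfolding D by (simp add: power2_eq_square algebra_simps)
  hence "D*t1 = (D/2)*d1 - (sqrt 3*D/2)*d2" by (simp only: dot crs)
  hence "D*t1 = D*(d1/2 - sqrt 3/2*d2)" by (simp add: algebra_simps)
  hence t1: "t1 = d1/2 - sqrt 3/2*d2" using Dp by simp
  have "D*t2 = (t1*d1 + t2*d2)*d2 + (d1*t2 - d2*t1)*d1" unfolding D by (simp add: power2_eq_square algebra_simps)
  hence "D*t2 = (D/2)*d2 + (sqrt 3*D/2)*d1" by (simp only: dot crs)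
  hence "D*t2 = D*(d2/2 + sqrt 3/2*d1)" by (simp add: algebra_simps)
  hence t2: "t2 = d2/2 + sqrt 3/2*d1" using Dp by simp
  have zd: "z1*d1+z2*d2 = D/2" using D h4 by (simp add: power2_eq_square algebra_simps)
  have zt: "z1*t1+z2*t2 = D/2" using h1 h5 by (simp add: power2_eq_square algebra_simps)
  have "z1*t1+z2*t2 = (z1*d1+z2*d2)/2 + sqrt 3/2*(d1*z2-d2*z1)" unfolding t1 t2 by (simp add: field_simps)
  hence "sqrt 3/2*(d1*z2-d2*z1) = D/4" using zd zt by simp
  hence zc: "d1*z2-d2*z1 = D/(2*sqrt 3)" using rp by (simp add: field_simps)
  have "D*z1 = (z1*d1+z2*d2)*d1 - (d1*z2-d2*z1)*d2" unfolding D by (simp add: power2_eq_square algebra_simps)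
  hence "D*z1 = (D/2)*d1 - (D/(2*sqrt 3))*d2" by (simp only: zd zc)
  hence "D*z1 = D*(d1/2 - d2/(2*sqrt 3))" by (simp add: algebra_simps)
  hence z1: "z1 = d1/2 - d2/(2*sqrt 3)" using Dp by simp
  have "D*z2 = (z1*d1+z2*d2)*d2 + (d1*z2-d2*z1)*d1" unfolding D by (simp add: power2_eq_square algebra_simps)
  hence "D*z2 = (D/2)*d2 + (D/(2*sqrt 3))*d1" by (simp only: zd zc)
  hence "D*z2 = D*(d2/2 + d1/(2*sqrt 3))" by (simp add: algebra_simps)
  hence z2: "z2 = d2/2 + d1/(2*sqrt 3)" using Dp by simp
  show ?thesis using z1 z2 by simp
qed

theorem mainTheorem3:
  fixes A B C T Z :: complex
  assumes ccw: "signed_area A B C > 0"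
    and T_eq: "dist B T = dist B ((B + C) / 2)" "dist ((B + C) / 2) T = dist B ((B + C) / 2)"
    and T_side: "same_side B C T A"
    and O_circ: "dist Z B = dist Z ((B + C) / 2)" "dist Z B = dist Z T"
  shows "let P1 = A + rho * (C - A); P2 = A + inverse rho * (B - A);
             X = P2 + inverse rho * (A - P2); Y = P2 + rho * (P1 - P2);
             s = signed_area P2 Y X
         in (dist A Z > dist Z B \<longrightarrow> s > 0) \<and>
            (dist A Z = dist Z B \<longrightarrow> s = 0) \<and>
            (dist A Z < dist Z B \<longrightarrow> s < 0)"
proof -
  obtain xa ya where A: "A = Complex xa ya" by (cases A)
  obtain xb yb where B: "B = Complex xb yb" by (cases B)
  obtain xc yc where C: "C = Complex xc yc" by (cases C)
  obtain xt yt where T: "T = Complex xt yt" by (cases T)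
  obtain xz yz where Z: "Z = Complex xz yz" by (cases Z)
  have rho: "rho = Complex (-1/2) (sqrt 3/2)"
    by (simp add: rho_def cis.ctr cos_120 sin_120)
  have irho: "inverse rho = Complex (-1/2) (-(sqrt 3/2))"
    by (simp add: rho inverse_complex.ctr power2_eq_square)
  have dsq: "\<And>x y p q. dist (Complex x y) (Complex p q) = sqrt ((x-p)^2 + (y-q)^2)"
    by (simp add: dist_norm cmod_def)
  have half: "(B + C) / 2 = Complex ((xb+xc)/2) ((yb+yc)/2)" unfolding B C
    by (simp add: Complex_eq field_simps)
  define d1 where "d1 = (xc-xb)/2"
  define d2 where "d2 = (yc-yb)/2"
  define D where "D = d1^2+d2^2"
  have sa: "signed_area A B C = signed_area B C A"
    unfolding signed_area_def A B C by (simp add: algebra_simps)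
  have sBCT: "signed_area B C T > 0"
    using T_side ccw sa unfolding same_side_def by (simp add: zero_less_mult_iff)
  have h3: "d1*(yt-yb) - d2*(xt-xb) > 0"
    using sBCT unfolding signed_area_def B C T d1_def d2_def by (simp add: field_simps)
  have Dp: "D > 0"
  proof -
    have "B \<noteq> C" using ccw unfolding signed_area_def by (auto simp: algebra_simps)
    hence "d1 \<noteq> 0 \<or> d2 \<noteq> 0" unfolding B C d1_def d2_def by auto
    thus ?thesis unfolding D_def by (auto simp: sum_power2_gt_zero_iff)
  qed
  have h1: "(xt-xb)^2+(yt-yb)^2 = D"
    using T_eq(1)[unfolded half, unfolded B T dsq] unfolding D_def d1_def d2_def
    by (simp add: power2_commute field_simps)
  have h2: "((xt-xb)-d1)^2+((yt-yb)-d2)^2 = D"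
    using T_eq(2)[unfolded half, unfolded B T dsq] unfolding D_def d1_def d2_def
    by (simp add: power2_commute field_simps)
  have h4: "(xz-xb)^2+(yz-yb)^2 = ((xz-xb)-d1)^2+((yz-yb)-d2)^2"
    using O_circ(1)[unfolded half, unfolded B Z dsq] unfolding d1_def d2_def
    by (simp add: power2_commute field_simps)
  have h5: "(xz-xb)^2+(yz-yb)^2 = ((xz-xb)-(xt-xb))^2+((yz-yb)-(yt-yb))^2"
    using O_circ(2)[unfolded B Z T dsq] by (simp add: power2_commute)
  have zz: "xz-xb = d1/2 - d2/(2*sqrt 3) \<and> yz-yb = d2/2 + d1/(2*sqrt 3)"
    by (rule solveTZ[OF D_def Dp h1 h2 h3 h4 h5])
  have xz: "xz = xb + d1/2 - d2/(2*sqrt 3)" and yz: "yz = yb + d2/2 + d1/(2*sqrt 3)"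
    using zz by auto
  have r3: "sqrt 3 * sqrt 3 = (3::real)" by simp
  have rp: "sqrt 3 > (0::real)" by simp
  have r3': "\<And>x. sqrt 3 * (sqrt 3 * x) = (3::real) * x" by (simp add: mult.assoc[symmetric])
  have sid0: "2 * signed_area (A + inverse rho * (B - A))
       (A + inverse rho * (B - A) + rho * (A + rho * (C - A) - (A + inverse rho * (B - A))))
       (A + inverse rho * (B - A) + inverse rho * (A - (A + inverse rho * (B - A))))
     = sqrt 3 * ((xa-xb)^2+(ya-yb)^2) - sqrt 3*((xa-xb)*d1+(ya-yb)*d2) - ((ya-yb)*d1 - (xa-xb)*d2)"
    unfolding signed_area_def rho irho A B C d1_def d2_def
    apply (simp add: algebra_simps power2_eq_square)
    apply (simp add: field_simps)
    done
  have rhs: "sqrt 3 * (((xa-xz)^2+(ya-yz)^2) - ((xz-xb)^2+(yz-yb)^2)) = 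
     sqrt 3 * ((xa-xb)^2+(ya-yb)^2) - sqrt 3*((xa-xb)*d1+(ya-yb)*d2) - ((ya-yb)*d1 - (xa-xb)*d2)"
  proof -
    define z1 where "z1 = xz - xb"
    define z2 where "z2 = yz - yb"
    have e1: "((xa-xz)^2+(ya-yz)^2) - ((xz-xb)^2+(yz-yb)^2) = ((xa-xb)^2+(ya-yb)^2) - 2*((xa-xb)*z1+(ya-yb)*z2)"
      unfolding z1_def z2_def by (simp add: algebra_simps power2_eq_square)
    have e2: "sqrt 3 * (2*((xa-xb)*z1+(ya-yb)*z2)) = sqrt 3*((xa-xb)*d1+(ya-yb)*d2) + ((ya-yb)*d1 - (xa-xb)*d2)"
      unfolding z1_def z2_def xz yz using rp
      apply (simp add: field_simps)
      apply (simp add: r3' algebra_simps)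
      done
    show ?thesis unfolding e1 using e2 by (simp add: right_diff_distrib)
  qed
  define q where "q = ((xa-xz)^2+(ya-yz)^2) - ((xz-xb)^2+(yz-yb)^2)"
  have sid: "2 * signed_area (A + inverse rho * (B - A))
       (A + inverse rho * (B - A) + rho * (A + rho * (C - A) - (A + inverse rho * (B - A))))
       (A + inverse rho * (B - A) + inverse rho * (A - (A + inverse rho * (B - A))))
     = sqrt 3 * q" unfolding q_def using sid0 rhs by simp
  have dA: "dist A Z = sqrt ((xa-xz)^2+(ya-yz)^2)" unfolding A Z dsq ..
  have dB: "dist Z B = sqrt ((xz-xb)^2+(yz-yb)^2)" unfolding B Z dsq ..
  have c1: "dist A Z > dist Z B \<longleftrightarrow> q > 0" unfolding dA dB q_def by simp
  have c2: "dist A Z = dist Z B \<longleftrightarrow> q = 0" unfolding dA dB q_def by simp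
  have c3: "dist A Z < dist Z B \<longleftrightarrow> q < 0" unfolding dA dB q_def by simp
  show ?thesis unfolding Let_def using sid c1 c2 c3 rp
    by (smt (verit) mult_pos_pos mult_pos_neg mult_eq_0_iff)
qed

end
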